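(* In the setting below, for any $\varepsilon>0$ and $\theta\in\mathbb{R}$, PrivTree$(D,\lambda,\theta,\delta)$ satisfies $\varepsilon$-differential privacy if $\lambda\ge\frac{2\beta-1}{\beta-1}\cdot\frac{1}{\varepsilon}$ and $\delta=\lambda\ln\beta$, where $\beta\ge 2$ is the fanout of the splitting scheme.
   Context: $\mathrm{Lap}(\lambda)$ is the Laplace distribution with density $\frac{1}{2\lambda}e^{-|y|/\lambda}$. Setting: $\Omega$ is a domain and there is a fixed, data-independent hierarchical splitting scheme of fanout $\beta\ge 2$: an infinite rooted tree of candidate nodes in which every node $v$ has exactly $\beta$ children, each node $v$ carries a sub-domain $\mathrm{dom}(v)\subseteq\Omega$, the root $v_1$ has $\mathrm{dom}(v_1)=\Omega$, and the sub-domains of the $\beta$ children of $v$ partition $\mathrm{dom}(v)$. $\mathrm{depth}(v)$ is the hop distance from $v$ to the root. A dataset $D$ is a finite multiset of points of $\Omega$; $c(v)$ is the number of points of $D$ lying in $\mathrm{dom}(v)$. PrivTree$(D,\lambda,\theta,\delta)$: start with the tree consisting only of the root, marked unvisited. While some node $v$ is unvisited: mark $v$ visited; set $b(v)=\max\{\theta-\delta,\ c(v)-\mathrm{depth}(v)\cdot\delta\}$; set $\hat b(v)=b(v)+\eta_v$ with $\eta_v\sim\mathrm{Lap}(\lambda)$ fresh and independent; if $\hat b(v)>\theta$, add all $\beta$ children of $v$ as unvisited nodes. The output is the resulting tree (nodes with sub-domains), with all counts removed. Two datasets are neighboring if one is obtained from the other by inserting one point. An algorithm $\mathcal{A}$ is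 $\varepsilon$-differentially private if for all neighboring $D,D'$ and every possible output $O$, $\ln\big(\Pr[\mathcal{A}(D)=O]/\Pr[\mathcal{A}(D')=O]\big)\le\varepsilon$. *)

theory Defs
  imports "HOL-Probability.Probability"
begin

definition laplace_density :: "real \<Rightarrow> real \<Rightarrow> real" where
  "laplace_density lam y = exp (- \<bar>y\<bar> / lam) / (2 * lam)"

definition laplace :: "real \<Rightarrow> real measure" where
  "laplace lam = density lborel (\<lambda>y. ennreal (laplace_density lam y))"

text \<open>Candidate nodes of the infinite beta-ary tree: lists over {0..<beta}; the root is [],
  the children of v are v @ [i] for i < beta, and depth v = length v.\<close>
definition cand_nodes :: "nat \<Rightarrow> nat list set" where
  "cand_nodes \<beta> = {v. set v \<subseteq> {..<\<beta>}}"

definition splitting_scheme :: "'a set \<Rightarrow> nat \<Rightarrow> (nat list \<Rightarrow> 'a set) \<Rightarrow> bool" where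
  "splitting_scheme \<Omega> \<beta> dm \<longleftrightarrow> 2 \<le> \<beta> \<and> dm [] = \<Omega> \<and>
     (\<forall>v \<in> cand_nodes \<beta>. (\<Union>i<\<beta>. dm (v @ [i])) = dm v \<and>
        (\<forall>i<\<beta>. \<forall>j<\<beta>. i \<noteq> j \<longrightarrow> dm (v @ [i]) \<inter> dm (v @ [j]) = {}))"

definition node_count :: "(nat list \<Rightarrow> 'a set) \<Rightarrow> 'a multiset \<Rightarrow> nat list \<Rightarrow> nat" where
  "node_count dm D v = size (filter_mset (\<lambda>p. p \<in> dm v) D)"

definition biased_count ::
  "(nat list \<Rightarrow> 'a set) \<Rightarrow> 'a multiset \<Rightarrow> real \<Rightarrow> real \<Rightarrow> nat list \<Rightarrow> real" where
  "biased_count dm D \<theta> \<delta> v = max (\<theta> - \<delta>) (real (node_count dm D v) - real (length v) * \<delta>)"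

text \<open>The tree output by PrivTree when node v receives noise eta v: a candidate node is
  in the tree iff every proper ancestor u was split, i.e. b(u) + eta u > theta.\<close>
definition privtree_output ::
  "nat \<Rightarrow> (nat list \<Rightarrow> 'a set) \<Rightarrow> 'a multiset \<Rightarrow> real \<Rightarrow> real \<Rightarrow> (nat list \<Rightarrow> real) \<Rightarrow> nat list set" where
  "privtree_output \<beta> dm D \<theta> \<delta> \<eta> =
     {v \<in> cand_nodes \<beta>. \<forall>k < length v. biased_count dm D \<theta> \<delta> (take k v) + \<eta> (take k v) > \<theta>}"

definition noise_space :: "real \<Rightarrow> (nat list \<Rightarrow> real) measure" where
  "noise_space lam = PiM UNIV (\<lambda>_. laplace lam)"

definition privtree_prob ::
  "nat \<Rightarrow> (nat list \<Rightarrow> 'a set) \<Rightarrow> 'a multiset \<Rightarrow> real \<Rightarrow> real \<Rightarrow> real \<Rightarrow> nat list set \<Rightarrow> real" where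
  "privtree_prob \<beta> dm D lam \<theta> \<delta> T =
     measure (noise_space lam) {\<eta> \<in> space (noise_space lam). privtree_output \<beta> dm D \<theta> \<delta> \<eta> = T}"

end

theory Submission
  imports Defs "HOL-Real_Asymp.Real_Asymp"
begin

definition Gf :: "real \<Rightarrow> real \<Rightarrow> real" where
  "Gf lam t = (if 0 \<le> t then exp (- t / lam) / 2 else 1 - exp (t / lam) / 2)"

definition Hf :: "real \<Rightarrow> real \<Rightarrow> real" where
  "Hf lam y = min 1 (exp (y / lam)) / lam"

lemma Gf_pos: "lam > 0 \<Longrightarrow> 0 < Gf lam t"
proof -
  assume l: "lam > 0"
  show ?thesis
  proof (cases "0 \<le> t")
    case False
    then have "t / lam < 0" using l by (simp add: divide_neg_pos)
    then have "exp (t/lam) < 1" by simp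
    moreover have "Gf lam t = 1 - exp (t/lam) / 2" using False by (simp add: Gf_def)
    ultimately show ?thesis by linarith
  qed (simp add: Gf_def)
qed

lemma Gf_lt1: "lam > 0 \<Longrightarrow> Gf lam t < 1"
proof -
  assume l: "lam > 0"
  show ?thesis
  proof (cases "0 \<le> t")
    case True
    then have "-t / lam \<le> 0" using l by (simp add: divide_nonpos_pos)
    then have "exp (-t/lam) \<le> 1" by simp
    moreover have "Gf lam t = exp (-t/lam) / 2" using True by (simp add: Gf_def)
    ultimately show ?thesis by linarith
  qed (simp add: Gf_def)
qed

lemma Gf_ge_half_neg: "lam > 0 \<Longrightarrow> t \<le> 0 \<Longrightarrow> Gf lam t = 1 - exp (t/lam) / 2"
  by (auto simp: Gf_def)

lemma Gf_antimono:
  assumes l: "lam > 0" and ab: "a \<le> b" shows "Gf lam b \<le> Gf lam a"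
proof -
  have e1: "exp (-b/lam) \<le> exp (-a/lam)" using ab l by (simp add: divide_right_mono)
  have e2: "exp (a/lam) \<le> exp (b/lam)" using ab l by (simp add: divide_right_mono)
  show ?thesis
  proof (cases "0 \<le> a")
    case True then show ?thesis using ab e1 by (simp add: Gf_def)
  next
    case False
    show ?thesis
    proof (cases "0 \<le> b")
      case True
      have "exp (-b/lam) \<le> 1" using True l by (simp add: divide_nonpos_pos)
      moreover have "exp (a/lam) \<le> 1" using False l by (simp add: divide_nonpos_pos)
      moreover have "Gf lam a = 1 - exp (a/lam)/2" using False by (simp add: Gf_def)
      moreover have "Gf lam b = exp (-b/lam)/2" using True by (simp add: Gf_def)
      ultimately show ?thesis by linarith
    next
      case False2: False
      then show ?thesis using False e2 by (simp add: Gf_def)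
    qed
  qed
qed

lemma Hf_nonneg: "lam > 0 \<Longrightarrow> 0 \<le> Hf lam y"
  by (simp add: Hf_def)

lemma Hf_le1: "lam > 0 \<Longrightarrow> Hf lam y \<le> 1 / lam"
  by (simp add: Hf_def divide_right_mono)

lemma Hf_le_exp: "lam > 0 \<Longrightarrow> Hf lam y \<le> exp (y/lam) / lam"
  by (simp add: Hf_def divide_right_mono)

lemma ln_le_ratio: "0 < (p::real) \<Longrightarrow> 0 < q \<Longrightarrow> ln p - ln q \<le> p / q - 1"
  using ln_le_minus_one[of "p/q"] by (simp add: ln_div)

lemma Gf_hazard:
  assumes l: "lam > 0" and ab: "a \<le> b"
  shows "ln (Gf lam a) - ln (Gf lam b) \<le> (b - a) * Hf lam b"
proof (cases "0 \<le> a")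
  case True
  then have b0: "0 \<le> b" using ab by simp
  have "ln (Gf lam a) = - a / lam - ln 2" using True by (simp add: Gf_def ln_div)
  moreover have "ln (Gf lam b) = - b / lam - ln 2" using b0 by (simp add: Gf_def ln_div)
  moreover have "Hf lam b = 1 / lam" using b0 l by (simp add: Hf_def min_def)
  ultimately show ?thesis by (simp add: diff_divide_distrib)
next
  case False
  note a0 = False
  show ?thesis
  proof (cases "b < 0")
    case True
    have Ga: "Gf lam a = 1 - exp (a/lam)/2" and Gb: "Gf lam b = 1 - exp (b/lam)/2"
      using a0 True by (auto simp: Gf_def)
    have eb1: "exp (b/lam) < 1" using True l by (simp add: divide_neg_pos)
    have Hb: "Hf lam b = exp (b/lam) / lam" using eb1 by (simp add: Hf_def min_def)
    have Gbh: "1/2 \<le> Gf lam b" using Gb eb1 by simp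
    have "ln (Gf lam a) - ln (Gf lam b) \<le> Gf lam a / Gf lam b - 1"
      by (rule ln_le_ratio) (use Gf_pos l in auto)
    also have "\<dots> = (exp (b/lam) - exp (a/lam)) / (2 * Gf lam b)"
      using Gf_pos[OF l, of b] by (simp add: Ga Gb field_simps)
    also have "\<dots> \<le> exp (b/lam) - exp (a/lam)"
    proof -
      have "exp (a/lam) \<le> exp (b/lam)" using ab l by (simp add: divide_right_mono)
      then have d0: "0 \<le> exp (b/lam) - exp (a/lam)" by simp
      have "(exp (b/lam) - exp (a/lam)) / (2 * Gf lam b) \<le> (exp (b/lam) - exp (a/lam)) / 1"
        by (rule divide_left_mono) (use d0 Gbh in auto)
      then show ?thesis by simp
    qed
    also have "\<dots> = exp (b/lam) * (1 - exp ((a - b)/lam))"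
      by (simp add: algebra_simps diff_divide_distrib exp_diff)
    also have "\<dots> \<le> exp (b/lam) * ((b - a)/lam)"
    proof -
      have "1 + (a-b)/lam \<le> exp ((a-b)/lam)" by (rule exp_ge_add_one_self)
      moreover have "(a-b)/lam = - ((b - a)/lam)" by (metis minus_diff_eq minus_divide_left)
      ultimately have "1 - exp ((a - b)/lam) \<le> (b - a)/lam" by linarith
      from mult_left_mono[OF this, of "exp (b/lam)"] show ?thesis by simp
    qed
    also have "\<dots> = (b - a) * Hf lam b" using Hb by simp
    finally show ?thesis .
  next
    case False
    then have b0: "0 \<le> b" by simp
    have Ga: "Gf lam a = 1 - exp (a/lam)/2" using a0 by (simp add: Gf_def)
    have "ln (Gf lam b) = - b / lam - ln 2" using b0 by (simp add: Gf_def ln_div)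
    have Hb: "Hf lam b = 1 / lam" using b0 l by (simp add: Hf_def min_def)
    have "ln (Gf lam a) - ln (1/2) \<le> Gf lam a / (1/2) - 1"
      by (rule ln_le_ratio) (use Gf_pos l in auto)
    also have "\<dots> = 1 - exp (a/lam)" by (simp add: Ga)
    also have "\<dots> \<le> - (a / lam)" using exp_ge_add_one_self[of "a/lam"] by linarith
    finally have "ln (Gf lam a) + ln 2 \<le> - (a / lam)" by (simp add: ln_div)
    moreover have "ln (Gf lam b) = - b / lam - ln 2" using b0 by (simp add: Gf_def ln_div)
    ultimately show ?thesis using Hb by (simp add: algebra_simps diff_divide_distrib)
  qed
qed

lemma Fc_bound:
  assumes l: "lam > 0" and ab: "a \<le> b" and b1: "b \<le> a + 1"
  shows "1 - Gf lam b \<le> exp (1/lam) * (1 - Gf lam a)"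
proof -
  have Fa: "0 \<le> 1 - Gf lam a" using Gf_lt1[OF l] by (simp add: less_imp_le)
  have key: "1 - Gf lam b \<le> exp ((b - a)/lam) * (1 - Gf lam a)"
  proof (cases "b < 0")
    case True
    then have "a < 0" using ab by simp
    then show ?thesis using True
      by (simp add: Gf_def exp_diff diff_divide_distrib)
  next
    case False
    then have b0: "0 \<le> b" by simp
    show ?thesis
    proof (cases "a < 0")
      case True
      have "exp (b/lam) + exp (-b/lam) \<ge> 2"
        using exp_ge_add_one_self[of "b/lam"] exp_ge_add_one_self[of "-b/lam"] by linarith
      then show ?thesis using True b0
        by (simp add: Gf_def exp_diff diff_divide_distrib)
    next
      case False
      define p where "p = exp (-a/lam)"
      define q where "q = exp ((b-a)/lam)"
      have p1: "p \<le> 1" "0 < p" unfolding p_def using False l by (auto simp: divide_nonpos_pos)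
      have q1: "1 \<le> q" unfolding q_def using ab l by simp
      have ebq: "exp (-b/lam) = p / q" unfolding p_def q_def
        by (simp add: exp_diff[symmetric] diff_divide_distrib)
      have "1 - p/(2*q) \<le> q * (1 - p/2)"
      proof -
        have "q - p/2 \<le> q*q - q*q*p/2"
        proof -
          have "0 \<le> (q - 1) * (q - (p/2) * (q+1))"
          proof (rule mult_nonneg_nonneg)
            show "0 \<le> q - 1" using q1 by simp
            have h1: "(p/2)*(q+1) \<le> (1/2)*(q+1)" by (rule mult_right_mono) (use p1 q1 in auto)
            have h2: "(1/2)*(q+1) \<le> q" using q1 by simp
            from order_trans[OF h1 h2] show "0 \<le> q - (p/2) * (q+1)" by simp
          qed
          moreover have "(q - 1) * (q - (p/2) * (q+1)) = (q*q - q*q*p/2) - (q - p/2)"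
            by (simp add: field_simps)
          ultimately show ?thesis by linarith
        qed
        then show ?thesis using q1 by (simp add: field_simps)
      qed
      then show ?thesis using False b0 ebq unfolding q_def p_def
        by (simp add: Gf_def)
    qed
  qed
  have "exp ((b - a)/lam) \<le> exp (1/lam)" using b1 l by (simp add: divide_right_mono)
  then have "exp ((b - a)/lam) * (1 - Gf lam a) \<le> exp (1/lam) * (1 - Gf lam a)"
    using Fa by (rule mult_right_mono)
  with key show ?thesis by linarith
qed

definition rho :: "real \<Rightarrow> real \<Rightarrow> real \<Rightarrow> real" where
  "rho lam d x = ln (Gf lam (min d (- x))) - ln (Gf lam (min d (1 - x)))"

lemma rho_nonneg: "lam > 0 \<Longrightarrow> 0 \<le> rho lam d x"
proof -
  assume l: "lam > 0"
  have "Gf lam (min d (1 - x)) \<le> Gf lam (min d (- x))" by (rule Gf_antimono[OF l]) auto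
  then show ?thesis unfolding rho_def using Gf_pos[OF l] by simp
qed

lemma step_bound:
  assumes l: "lam > 0" and N: "N > 0"
  shows "ln (Gf lam (min d (s - x))) - ln (Gf lam (min d (s + 1/N - x)))
         \<le> (1/N) * (if s - x < d then Hf lam (min d (s + 1/N - x)) else 0)"
proof (cases "s - x < d")
  case True
  let ?a = "min d (s - x)" and ?b = "min d (s + 1/N - x)"
  have p: "0 < 1/N" using N by simp
  have "s - x \<le> s + 1/N - x" using p by linarith
  then have ab: "?a \<le> ?b" by (rule min.mono[OF order_refl])
  have "ln (Gf lam ?a) - ln (Gf lam ?b) \<le> (?b - ?a) * Hf lam ?b" by (rule Gf_hazard[OF l ab])
  also have "\<dots> \<le> (1/N) * Hf lam ?b"
  proof (rule mult_right_mono)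
    show "?b - ?a \<le> 1/N" using True by auto
  qed (rule Hf_nonneg[OF l])
  finally show ?thesis using True by simp
next
  case False
  have p: "0 < 1/N" using N by simp
  have "d \<le> s + 1/N - x" using False p by linarith
  then have "min d (s - x) = d" "min d (s + 1/N - x) = d" using False by auto
  then show ?thesis using False by simp
qed

lemma geo_sum:
  fixes r E lam :: real
  assumes r: "r \<noteq> 1" and l: "lam > 0"
  shows "(\<Sum>j<n+2. (if j \<le> 1 then 1/lam else E * r^(j-1) / lam))
          = 2/lam + E/lam * (r * (1 - r^n) / (1 - r))"
proof (induction n)
  case 0
  have "{..<2::nat} = {0,1}" by auto
  then show ?case by simp
next
  case (Suc n)
  have "(\<Sum>j<Suc n + 2. (if j \<le> 1 then 1/lam else E * r^(j-1) / lam))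
      = (\<Sum>j<n+2. (if j \<le> 1 then 1/lam else E * r^(j-1) / lam)) + E * r^(n+1) / lam"
    by simp
  also have "\<dots> = 2/lam + E/lam * (r * (1 - r^n) / (1 - r)) + E * r^(n+1) / lam" using Suc by simp
  also have "\<dots> = 2/lam + E/lam * (r * (1 - r^(Suc n)) / (1 - r))"
  proof -
    have "1 - r \<noteq> 0" using r by simp
    then show ?thesis using l by (simp add: field_simps)
  qed
  finally show ?case .
qed

lemma geo_bound:
  fixes bb E lam :: real
  assumes b: "bb \<ge> 2" and E: "E \<ge> 0" and l: "lam > 0"
  shows "(\<Sum>j<n. (if j \<le> 1 then 1/lam else E * (1/bb)^(j-1) / lam)) \<le> (2 + E/(bb - 1))/lam"
proof -
  let ?g = "\<lambda>j::nat. (if j \<le> 1 then 1/lam else E * (1/bb)^(j-1) / lam)"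
  have g0: "\<And>j. 0 \<le> ?g j" using E l b by auto
  have "sum ?g {..<n} \<le> sum ?g {..<n+2}"
    by (rule sum_mono2) (use g0 in auto)
  also have "\<dots> = 2/lam + E/lam * ((1/bb) * (1 - (1/bb)^n) / (1 - 1/bb))"
    by (rule geo_sum) (use b l in auto)
  also have "\<dots> \<le> 2/lam + E/lam * ((1/bb) / (1 - 1/bb))"
  proof -
    have p: "0 \<le> (1/bb)^n" using b by simp
    have "(1/bb) * (1 - (1/bb)^n) / (1 - 1/bb) \<le> (1/bb) / (1 - 1/bb)"
      using b p by (intro divide_right_mono) (auto simp: field_simps)
    moreover have "0 \<le> E/lam" using E l by simp
    ultimately have "E/lam * ((1/bb) * (1 - (1/bb)^n) / (1 - 1/bb)) \<le> E/lam * ((1/bb) / (1 - 1/bb))"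
      by (rule mult_left_mono)
    then show ?thesis by linarith
  qed
  also have "\<dots> = (2 + E/(bb - 1))/lam" using b l by (simp add: field_simps)
  finally show ?thesis .
qed

lemma inner_bound:
  fixes A :: "'b set" and len :: "'b \<Rightarrow> nat" and x :: "'b \<Rightarrow> real"
  assumes l: "lam > 0" and b: "bb \<ge> 2" and d: "d = lam * ln bb" and N: "N > 0"
    and fin: "finite A" and inj: "inj_on len A"
    and sp: "\<forall>u\<in>A. \<forall>v\<in>A. len u \<le> len v \<longrightarrow> x v + real (len v - len u) * d \<le> x u"
  shows "(\<Sum>u\<in>A. (if s - x u < d then Hf lam (min d (s + 1/N - x u)) else 0))
          \<le> (2 + exp (1/(N*lam))/(bb - 1))/lam"
proof -
  define E where "E = exp (1/(N*lam))"
  define A' where "A' = {u\<in>A. s - x u < d}"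
  let ?g = "\<lambda>j::nat. (if j \<le> 1 then 1/lam else E * (1/bb)^(j-1) / lam)"
  have E0: "E \<ge> 0" unfolding E_def by simp
  have "(\<Sum>u\<in>A. (if s - x u < d then Hf lam (min d (s + 1/N - x u)) else 0))
       = (\<Sum>u\<in>A'. Hf lam (min d (s + 1/N - x u)))"
    unfolding A'_def using fin by (simp add: sum.inter_filter)
  also have "\<dots> \<le> (2 + E/(bb - 1))/lam"
  proof (cases "A' = {}")
    case True
    then show ?thesis using E0 b l by simp
  next
    case False
    have finA': "finite A'" using fin unfolding A'_def by simp
    define m where "m = Max (len ` A')"
    have "m \<in> len ` A'" unfolding m_def using finA' False by simp
    then obtain u0 where u0: "u0 \<in> A'" "len u0 = m" by auto
    have lenle: "\<And>u. u \<in> A' \<Longrightarrow> len u \<le> m" unfolding m_def using finA' by simp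
    have u0A: "u0 \<in> A" "s - x u0 < d" using u0 unfolding A'_def by auto
    have pt: "Hf lam (min d (s + 1/N - x u)) \<le> ?g (m - len u)" if uA': "u \<in> A'" for u
    proof -
      have uA: "u \<in> A" using uA' unfolding A'_def by auto
      have le: "len u \<le> len u0" using lenle[OF uA'] u0 by simp
      have spu: "x u0 + real (m - len u) * d \<le> x u" using sp uA u0A le u0 by auto
      show ?thesis
      proof (cases "m - len u \<le> 1")
        case True then show ?thesis using Hf_le1[OF l] by simp
      next
        case False
        define k where "k = m - len u - 1"
        have mk: "real (m - len u) = real k + 1" unfolding k_def using False by simp
        have w: "s + 1/N - x u \<le> 1/N - real k * d"
          using spu u0A mk by (simp add: algebra_simps) 
        have "Hf lam (min d (s + 1/N - x u)) \<le> exp (min d (s + 1/N - x u) / lam) / lam"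
          by (rule Hf_le_exp[OF l])
        also have "\<dots> \<le> exp ((1/N - real k * d) / lam) / lam"
          using w l by (simp add: divide_right_mono)
        also have "exp ((1/N - real k * d) / lam) = E * (1/bb)^k"
        proof -
          have "(1/N - real k * d) / lam = 1/(N*lam) - real k * ln bb"
            using l unfolding d by (simp add: field_simps)
          then have "exp ((1/N - real k * d) / lam) = E / exp (real k * ln bb)"
            unfolding E_def by (simp add: exp_diff)
          also have "exp (real k * ln bb) = bb^k"
            using b by (simp add: exp_of_nat_mult)
          finally show ?thesis by (simp add: power_one_over)
        qed
        finally show ?thesis using False unfolding k_def by simp
      qed
    qed
    have "(\<Sum>u\<in>A'. Hf lam (min d (s + 1/N - x u))) \<le> (\<Sum>u\<in>A'. ?g (m - len u))"
      by (rule sum_mono) (rule pt)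
    also have "\<dots> = (\<Sum>j\<in>(\<lambda>u. m - len u) ` A'. ?g j)"
    proof (rule sum.reindex[symmetric, unfolded comp_def])
      show "inj_on (\<lambda>u. m - len u) A'"
      proof (rule inj_onI)
        fix u v assume uv: "u \<in> A'" "v \<in> A'" "m - len u = m - len v"
        have "len u \<le> m" "len v \<le> m" using lenle uv by auto
        then have "len u = len v" using uv(3) by (metis diff_diff_cancel)
        then show "u = v" using inj uv unfolding A'_def by (auto dest: inj_onD)
      qed
    qed
    also have "\<dots> \<le> (\<Sum>j<m+1. ?g j)"
      by (rule sum_mono2) (use E0 b l in auto)
    also have "\<dots> \<le> (2 + E/(bb - 1))/lam" by (rule geo_bound[OF b E0 l])
    finally show ?thesis .
  qed
  finally show ?thesis unfolding E_def .
qed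

lemma core_N:
  fixes A :: "'b set" and len :: "'b \<Rightarrow> nat" and x :: "'b \<Rightarrow> real"
  assumes l: "lam > 0" and b: "bb \<ge> 2" and d: "d = lam * ln bb" and n: "n > 0"
    and fin: "finite A" and inj: "inj_on len A"
    and sp: "\<forall>u\<in>A. \<forall>v\<in>A. len u \<le> len v \<longrightarrow> x v + real (len v - len u) * d \<le> x u"
  shows "(\<Sum>u\<in>A. rho lam d (x u)) \<le> (2 + exp (1/(real n*lam))/(bb - 1))/lam"
proof -
  define N where "N = real n"
  have N: "N > 0" using n unfolding N_def by simp
  define f where "f u i = ln (Gf lam (min d (real i / N - x u)))" for u i
  define C where "C = (2 + exp (1/(N*lam))/(bb - 1))/lam"
  have rho_tel: "rho lam d (x u) = (\<Sum>i<n. f u i - f u (Suc i))" for u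
  proof -
    have "(\<Sum>i<n. f u i - f u (Suc i)) = f u 0 - f u n" by (rule sum_lessThan_telescope')
    moreover have "f u 0 = ln (Gf lam (min d (- x u)))" unfolding f_def by simp
    moreover have "f u n = ln (Gf lam (min d (1 - x u)))" unfolding f_def N_def using n by simp
    ultimately show ?thesis unfolding rho_def by simp
  qed
  have "(\<Sum>u\<in>A. rho lam d (x u)) = (\<Sum>u\<in>A. \<Sum>i<n. f u i - f u (Suc i))"
    using rho_tel by simp
  also have "\<dots> \<le> (\<Sum>u\<in>A. \<Sum>i<n. (1/N) * (if real i / N - x u < d
        then Hf lam (min d (real i / N + 1/N - x u)) else 0))"
  proof (intro sum_mono)
    fix u i
    have "f u (Suc i) = ln (Gf lam (min d (real i / N + 1/N - x u)))"
      unfolding f_def by (simp add: add_divide_distrib add.commute)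
    then show "f u i - f u (Suc i) \<le> (1/N) * (if real i / N - x u < d
        then Hf lam (min d (real i / N + 1/N - x u)) else 0)"
      unfolding f_def using step_bound[OF l N, of d "real i / N" "x u"] by simp
  qed
  also have "\<dots> = (\<Sum>i<n. (1/N) * (\<Sum>u\<in>A. (if real i / N - x u < d
        then Hf lam (min d (real i / N + 1/N - x u)) else 0)))"
    by (subst sum.swap) (simp add: sum_distrib_left)
  also have "\<dots> \<le> (\<Sum>i<n. (1/N) * C)"
  proof (rule sum_mono)
    fix i
    show "(1/N) * (\<Sum>u\<in>A. (if real i / N - x u < d
        then Hf lam (min d (real i / N + 1/N - x u)) else 0)) \<le> (1/N) * C"
      unfolding C_def using N
      by (intro mult_left_mono inner_bound[OF l b d N fin inj sp]) auto
  qed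
  also have "\<dots> = C" using N unfolding N_def by simp
  finally show ?thesis unfolding C_def N_def .
qed

lemma core:
  fixes A :: "'b set" and len :: "'b \<Rightarrow> nat" and x :: "'b \<Rightarrow> real"
  assumes l: "lam > 0" and b: "bb \<ge> 2" and d: "d = lam * ln bb"
    and fin: "finite A" and inj: "inj_on len A"
    and sp: "\<forall>u\<in>A. \<forall>v\<in>A. len u \<le> len v \<longrightarrow> x v + real (len v - len u) * d \<le> x u"
  shows "(\<Sum>u\<in>A. rho lam d (x u)) \<le> (2 + 1/(bb - 1))/lam"
proof (rule LIMSEQ_le_const)
  let ?X = "\<lambda>n::nat. (2 + exp (1/(real n*lam))/(bb - 1))/lam"
  have "(\<lambda>n::nat. inverse (real n) * (1/lam)) \<longlonglongrightarrow> 0 * (1/lam)"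
    by (intro tendsto_intros lim_inverse_n)
  then have "(\<lambda>n::nat. 1/(real n*lam)) \<longlonglongrightarrow> 0"
    by (simp add: inverse_eq_divide)
  then have "(\<lambda>n::nat. exp (1/(real n*lam))) \<longlonglongrightarrow> exp 0"
    by (intro tendsto_intros)
  then have "(\<lambda>n::nat. exp (1/(real n*lam)) / (bb - 1)) \<longlonglongrightarrow> exp 0 / (bb - 1)"
    by (rule tendsto_divide) (use b in auto)
  then have "(\<lambda>n::nat. 2 + exp (1/(real n*lam)) / (bb - 1)) \<longlonglongrightarrow> 2 + exp 0 / (bb - 1)"
    by (rule tendsto_add[OF tendsto_const])
  then have "?X \<longlonglongrightarrow> (2 + exp 0/(bb - 1))/lam"
    by (rule tendsto_divide) (use l in auto)
  then show "?X \<longlonglongrightarrow> (2 + 1/(bb - 1))/lam" by simp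
  show "\<exists>N. \<forall>n\<ge>N. (\<Sum>u\<in>A. rho lam d (x u)) \<le> ?X n"
    by (rule exI[of _ 1]) (auto intro!: core_N[OF l b d _ fin inj sp])
qed

definition Fcdf :: "real \<Rightarrow> real \<Rightarrow> real" where
  "Fcdf lam y = (if 0 \<le> y then 1 - exp (- y / lam) / 2 else exp (y / lam) / 2)"

lemma Fcdf_eq: "Fcdf lam y = 1 - Gf lam y"
  by (simp add: Fcdf_def Gf_def)

lemma deriv_glue:
  fixes f g k :: "real \<Rightarrow> real"
  assumes g: "DERIV g 0 :> D" and k: "DERIV k 0 :> D"
    and fg: "\<And>y. 0 \<le> y \<Longrightarrow> f y = g y" and fk: "\<And>y. y \<le> 0 \<Longrightarrow> f y = k y"
  shows "DERIV f 0 :> D"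
proof -
  have g': "((\<lambda>h. (g (0 + h) - g 0) / h) \<longlongrightarrow> D) (at 0)" using g unfolding DERIV_def .
  have k': "((\<lambda>h. (k (0 + h) - k 0) / h) \<longlongrightarrow> D) (at 0)" using k unfolding DERIV_def .
  have r: "((\<lambda>h. (f (0 + h) - f 0) / h) \<longlongrightarrow> D) (at_right 0)"
  proof -
    have lim: "((\<lambda>h. (g (0 + h) - g 0) / h) \<longlongrightarrow> D) (at_right 0)"
      using filterlim_at_split[THEN iffD1, OF g'] by (rule conjunct2)
    have ev: "eventually (\<lambda>h. (f (0 + h) - f 0) / h = (g (0 + h) - g 0) / h) (at_right 0)"
      using eventually_at_right_less[of "0::real"]
    proof (rule eventually_mono)
      fix h :: real assume "0 < h" then show "(f (0 + h) - f 0) / h = (g (0 + h) - g 0) / h"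
        using fg[of h] fg[of 0] by simp
    qed
    show ?thesis using tendsto_cong[OF ev] lim by (rule iffD2)
  qed
  have lft: "((\<lambda>h. (f (0 + h) - f 0) / h) \<longlongrightarrow> D) (at_left 0)"
  proof -
    have lim: "((\<lambda>h. (k (0 + h) - k 0) / h) \<longlongrightarrow> D) (at_left 0)"
      using filterlim_at_split[THEN iffD1, OF k'] by (rule conjunct1)
    have ev: "eventually (\<lambda>h. (f (0 + h) - f 0) / h = (k (0 + h) - k 0) / h) (at_left 0)"
      unfolding eventually_at_left_field
    proof (rule exI[of _ "-1"], intro conjI allI impI)
      fix h :: real assume "-1 < h" "h < 0" then show "(f (0 + h) - f 0) / h = (k (0 + h) - k 0) / h"
        using fk[of h] fk[of 0] by simp
    qed simp
    show ?thesis using tendsto_cong[OF ev] lim by (rule iffD2)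
  qed
  show ?thesis unfolding DERIV_def using filterlim_at_split[THEN iffD2, OF conjI[OF lft r]] .
qed
lemma Fcdf_deriv:
  assumes l: "lam > 0"
  shows "DERIV (Fcdf lam) y :> laplace_density lam y"
proof -
  have dg: "DERIV (\<lambda>y. 1 - exp (- y / lam) / 2) y :> exp (- y / lam) / (2 * lam)" for y
    using l by (auto intro!: derivative_eq_intros simp: field_simps)
  have dk: "DERIV (\<lambda>y. exp (y / lam) / 2) y :> exp (y / lam) / (2 * lam)" for y
    using l by (auto intro!: derivative_eq_intros simp: field_simps)
  consider "y > 0" | "y < 0" | "y = 0" by linarith
  then show ?thesis
  proof cases
    case 1
    have ev: "eventually (\<lambda>z. z \<in> {0<..}) (nhds y)"
      by (rule eventually_nhds_in_open) (use 1 in auto)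
    have ev2: "eventually (\<lambda>z. Fcdf lam z = 1 - exp (- z / lam) / 2) (nhds y)"
      using ev by (rule eventually_mono) (simp add: Fcdf_def)
    have "DERIV (Fcdf lam) y :> exp (- y / lam) / (2 * lam)"
      using DERIV_cong_ev[OF refl ev2 refl] dg[of y] by blast
    moreover have "laplace_density lam y = exp (- y / lam) / (2 * lam)"
      using 1 by (simp add: laplace_density_def)
    ultimately show ?thesis by simp
  next
    case 2
    have ev: "eventually (\<lambda>z. z \<in> {..<0}) (nhds y)"
      by (rule eventually_nhds_in_open) (use 2 in auto)
    have ev2: "eventually (\<lambda>z. Fcdf lam z = exp (z / lam) / 2) (nhds y)"
      using ev by (rule eventually_mono) (simp add: Fcdf_def)
    have "DERIV (Fcdf lam) y :> exp (y / lam) / (2 * lam)"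
      using DERIV_cong_ev[OF refl ev2 refl] dk[of y] by blast
    moreover have "laplace_density lam y = exp (y / lam) / (2 * lam)"
      using 2 by (simp add: laplace_density_def)
    ultimately show ?thesis by simp
  next
    case 3
    have "DERIV (Fcdf lam) 0 :> exp (- 0 / lam) / (2 * lam)"
    proof (rule deriv_glue[OF dg])
      show "DERIV (\<lambda>y. exp (y / lam) / 2) 0 :> exp (- 0 / lam) / (2 * lam)"
        using dk[of 0] by simp
    next
      fix z :: real assume "0 \<le> z" then show "Fcdf lam z = 1 - exp (- z / lam) / 2" by (simp add: Fcdf_def)
    next
      fix z :: real assume "z \<le> 0" then show "Fcdf lam z = exp (z / lam) / 2"
        by (cases "z = 0") (simp_all add: Fcdf_def)
    qed
    then show ?thesis using 3 by (simp add: laplace_density_def)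
  qed
qed

lemma laplace_density_borel[measurable]: "laplace_density lam \<in> borel_measurable borel"
  unfolding laplace_density_def divide_inverse by (intro borel_measurable_continuous_onI continuous_intros)
lemma laplace_density_borel'[measurable]: "(\<lambda>y. ennreal (laplace_density lam y)) \<in> borel_measurable borel"
  using laplace_density_borel by (rule measurable_compose) simp

lemma Fcdf_lim: assumes l: "lam > 0" shows "(Fcdf lam \<longlongrightarrow> 1) at_top"
proof -
  have lim: "((\<lambda>y. 1 - exp (- y / lam) / 2) \<longlongrightarrow> 1) at_top" using l by real_asymp
  have ev: "eventually (\<lambda>y. Fcdf lam y = 1 - exp (- y / lam) / 2) at_top"
    using eventually_ge_at_top[of "0::real"] by (rule eventually_mono) (simp add: Fcdf_def)
  show ?thesis using tendsto_cong[OF ev] lim by (rule iffD2)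
qed

lemma laplace_nn_atLeast:
  assumes l: "lam > 0"
  shows "(\<integral>\<^sup>+x. ennreal (laplace_density lam x) * indicator {a ..} x \<partial>lborel) = ennreal (Gf lam a)"
proof -
  have "(\<integral>\<^sup>+x. ennreal (laplace_density lam x) * indicator {a ..} x \<partial>lborel) = ennreal (1 - Fcdf lam a)"
    by (rule nn_integral_FTC_atLeast[OF laplace_density_borel Fcdf_deriv[OF l] _ Fcdf_lim[OF l]])
       (use l in \<open>auto simp: laplace_density_def intro!: divide_nonneg_pos\<close>)
  then show ?thesis by (simp add: Fcdf_eq)
qed

lemma space_laplace[simp]: "space (laplace lam) = UNIV"
  by (simp add: laplace_def)

lemma sets_laplace[simp]: "sets (laplace lam) = sets borel"
  by (simp add: laplace_def)

lemma emeasure_laplace_atLeast: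
  assumes l: "lam > 0"
  shows "emeasure (laplace lam) {a ..} = ennreal (Gf lam a)"
  unfolding laplace_def
  by (subst emeasure_density) (auto simp: laplace_density_borel laplace_nn_atLeast[OF l])

lemma emeasure_laplace_greaterThan:
  assumes l: "lam > 0"
  shows "emeasure (laplace lam) {a <..} = ennreal (Gf lam a)"
proof -
  have "emeasure (laplace lam) {a <..} = (\<integral>\<^sup>+x. ennreal (laplace_density lam x) * indicator {a<..} x \<partial>lborel)"
    unfolding laplace_def by (subst emeasure_density) (auto simp: laplace_density_borel)
  also have "\<dots> = (\<integral>\<^sup>+x. ennreal (laplace_density lam x) * indicator {a..} x \<partial>lborel)"
    by (rule nn_integral_cong_AE) (use AE_lborel_singleton[of a] in \<open>auto elim!: eventually_mono split: split_indicator\<close>)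
  finally show ?thesis using laplace_nn_atLeast[OF l] by simp
qed

lemma prob_space_laplace:
  assumes l: "lam > 0"
  shows "prob_space (laplace lam)"
proof
  let ?A = "\<lambda>n::nat. {- real n ..}"
  have "(\<lambda>n. emeasure (laplace lam) (?A n)) \<longlonglongrightarrow> emeasure (laplace lam) (\<Union>n. ?A n)"
    by (rule Lim_emeasure_incseq) (auto simp: incseq_def)
  moreover have "(\<Union>n. ?A n) = UNIV"
  proof -
    have "y \<in> (\<Union>n. ?A n)" for y :: real
    proof -
      obtain n where "- y < real n" using reals_Archimedean2 by blast
      then show ?thesis by (intro UN_I[of n]) auto
    qed
    then show ?thesis by blast
  qed
  moreover have "(\<lambda>n. emeasure (laplace lam) (?A n)) \<longlonglongrightarrow> 1"
  proof -
    have e: "emeasure (laplace lam) (?A n) = ennreal (1 - exp (- real n / lam) / 2)" for n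
      using emeasure_laplace_atLeast[OF l, of "- real n"] by (simp add: Gf_def)
    have "(\<lambda>n::nat. 1 - exp (- real n / lam) / 2) \<longlonglongrightarrow> 1" using l by real_asymp
    then have "(\<lambda>n::nat. ennreal (1 - exp (- real n / lam) / 2)) \<longlonglongrightarrow> ennreal 1"
      by (rule tendsto_ennrealI)
    then show ?thesis unfolding e by simp
  qed
  ultimately show "emeasure (laplace lam) (space (laplace lam)) = 1"
    using LIMSEQ_unique by fastforce
qed

lemma measure_laplace_gt:
  assumes l: "lam > 0"
  shows "measure (laplace lam) {a<..} = Gf lam a"
  using emeasure_laplace_greaterThan[OF l, of a] Gf_pos[OF l, of a]
  by (simp add: measure_def)

lemma measure_laplace_le:
  assumes l: "lam > 0"
  shows "measure (laplace lam) {..a} = 1 - Gf lam a"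
proof -
  interpret prob_space "laplace lam" by (rule prob_space_laplace[OF l])
  have "{..a} = space (laplace lam) - {a<..}" by auto
  moreover have "{a<..} \<in> events" by simp
  ultimately have "measure (laplace lam) {..a} = 1 - measure (laplace lam) {a<..}"
    using prob_compl by simp
  then show ?thesis using measure_laplace_gt[OF l] by simp
qed

definition out :: "nat \<Rightarrow> real \<Rightarrow> (nat list \<Rightarrow> real) \<Rightarrow> (nat list \<Rightarrow> real) \<Rightarrow> nat list set" where
  "out b th B eta = {v \<in> cand_nodes b. \<forall>k < length v. th < B (take k v) + eta (take k v)}"

lemma privtree_output_out:
  "privtree_output b dm D th d eta = out b th (biased_count dm D th d) eta"
  unfolding privtree_output_def out_def by simp

definition valid :: "nat \<Rightarrow> nat list set \<Rightarrow> bool" where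
  "valid b T \<longleftrightarrow> T \<subseteq> cand_nodes b \<and> [] \<in> T \<and> (\<forall>v\<in>T. \<forall>k\<le>length v. take k v \<in> T) \<and>
     (\<forall>u. \<forall>i<b. \<forall>j<b. (u @ [i] \<in> T) = (u @ [j] \<in> T))"

lemma cand_take: "v \<in> cand_nodes b \<Longrightarrow> take k v \<in> cand_nodes b"
  unfolding cand_nodes_def using set_take_subset by fastforce

lemma cand_snoc: "(u @ [i] \<in> cand_nodes b) = (u \<in> cand_nodes b \<and> i < b)"
  unfolding cand_nodes_def by auto

lemma valid_out: "valid b (out b th B eta)"
proof -
  have a: "out b th B eta \<subseteq> cand_nodes b" unfolding out_def by auto
  have c: "[] \<in> out b th B eta" unfolding out_def cand_nodes_def by simp
  have d: "\<forall>v\<in>out b th B eta. \<forall>k\<le>length v. take k v \<in> out b th B eta"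
  proof (intro ballI allI impI)
    fix v k assume v: "v \<in> out b th B eta" and k: "k \<le> length v"
    have "take k v \<in> cand_nodes b" using v cand_take unfolding out_def by auto
    moreover have "\<forall>k'<length (take k v). th < B (take k' (take k v)) + eta (take k' (take k v))"
      using v k unfolding out_def by (auto simp: min_def)
    ultimately show "take k v \<in> out b th B eta" unfolding out_def by simp
  qed
  have e: "(u @ [i] \<in> out b th B eta) = (u \<in> cand_nodes b \<and> i < b \<and>
      (\<forall>k < length u. th < B (take k u) + eta (take k u)) \<and> th < B u + eta u)" for u i
  proof -
    have "(\<forall>k < length (u @ [i]). th < B (take k (u @ [i])) + eta (take k (u @ [i]))) =
          ((\<forall>k < length u. th < B (take k u) + eta (take k u)) \<and> th < B u + eta u)"
      by (auto simp: less_Suc_eq)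
    then show ?thesis unfolding out_def by (simp add: cand_snoc)
  qed
  have f: "\<forall>u. \<forall>i<b. \<forall>j<b. (u @ [i] \<in> out b th B eta) = (u @ [j] \<in> out b th B eta)"
    by (simp only: e) simp
  show ?thesis unfolding valid_def using a c d f by (intro conjI)
qed

lemma out_char:
  assumes V: "valid b T" and b: "0 < b"
  shows "(out b th B eta = T) \<longleftrightarrow> (\<forall>u\<in>T. (th < B u + eta u) = (u @ [0] \<in> T))"
proof
  assume o: "out b th B eta = T"
  show "\<forall>u\<in>T. (th < B u + eta u) = (u @ [0] \<in> T)"
  proof
    fix u assume u: "u \<in> T"
    have uo: "u \<in> out b th B eta" using o u by simp
    have "(u @ [0] \<in> out b th B eta) = (th < B u + eta u)"
    proof -
      have "(\<forall>k < length (u @ [0]). th < B (take k (u @ [0])) + eta (take k (u @ [0]))) =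
            ((\<forall>k < length u. th < B (take k u) + eta (take k u)) \<and> th < B u + eta u)"
        by (auto simp: less_Suc_eq)
      then show ?thesis using uo b unfolding out_def by (simp add: cand_snoc)
    qed
    then show "(th < B u + eta u) = (u @ [0] \<in> T)" using o by simp
  qed
next
  assume H: "\<forall>u\<in>T. (th < B u + eta u) = (u @ [0] \<in> T)"
  have VT: "T \<subseteq> cand_nodes b" "[] \<in> T" "\<forall>v\<in>T. \<forall>k\<le>length v. take k v \<in> T"
    "\<forall>u. \<forall>i<b. \<forall>j<b. (u @ [i] \<in> T) = (u @ [j] \<in> T)" using V unfolding valid_def by blast+
  have IND: "v \<in> cand_nodes b \<Longrightarrow> (v \<in> T) = (\<forall>k < length v. th < B (take k v) + eta (take k v))" for v
  proof (induction v rule: rev_induct)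
    case Nil then show ?case using VT(2) by simp
  next
    case (snoc i w)
    have wc: "w \<in> cand_nodes b" and ib: "i < b" using snoc.prems by (auto simp: cand_snoc)
    have eq: "(\<forall>k < length (w @ [i]). th < B (take k (w @ [i])) + eta (take k (w @ [i]))) =
            ((\<forall>k < length w. th < B (take k w) + eta (take k w)) \<and> th < B w + eta w)"
      by (auto simp: less_Suc_eq)
    have "(w @ [i] \<in> T) = (w \<in> T \<and> w @ [0] \<in> T)"
    proof
      assume "w @ [i] \<in> T"
      then have "take (length w) (w @ [i]) \<in> T" using VT(3)[rule_format, of "w @ [i]" "length w"] by simp
      moreover have "w @ [0] \<in> T" using \<open>w @ [i] \<in> T\<close> VT(4)[rule_format, OF ib b] by simp
      ultimately show "w \<in> T \<and> w @ [0] \<in> T" by simp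
    next
      assume "w \<in> T \<and> w @ [0] \<in> T"
      then show "w @ [i] \<in> T" using VT(4)[rule_format, OF ib b] by simp
    qed
    also have "\<dots> = (w \<in> T \<and> th < B w + eta w)" using H by auto
    also have "\<dots> = ((\<forall>k < length w. th < B (take k w) + eta (take k w)) \<and> th < B w + eta w)"
      using snoc.IH[OF wc] by simp
    finally show ?case using eq by simp
  qed
  show "out b th B eta = T"
  proof (rule set_eqI)
    fix v
    show "(v \<in> out b th B eta) = (v \<in> T)"
    proof (cases "v \<in> cand_nodes b")
      case True
      then show ?thesis using IND[OF True] unfolding out_def by simp
    next
      case False
      then show ?thesis using VT(1) unfolding out_def by blast
    qed
  qed
qed

definition mfac :: "real \<Rightarrow> real \<Rightarrow> (nat list \<Rightarrow> real) \<Rightarrow> nat list set \<Rightarrow> nat list \<Rightarrow> real" where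
  "mfac lam th B T u = (if u @ [0] \<in> T then Gf lam (th - B u) else 1 - Gf lam (th - B u))"

definition Sset :: "real \<Rightarrow> (nat list \<Rightarrow> real) \<Rightarrow> nat list set \<Rightarrow> nat list \<Rightarrow> real set" where
  "Sset th B T u = (if u @ [0] \<in> T then {th - B u <..} else {.. th - B u})"

lemma space_noise[simp]: "space (noise_space lam) = UNIV"
  by (simp add: noise_space_def space_PiM)

lemma finite_Tn: "T \<subseteq> cand_nodes b \<Longrightarrow> finite {u \<in> T. length u < n}"
proof -
  assume T: "T \<subseteq> cand_nodes b"
  have "{u \<in> T. length u < n} \<subseteq> {xs. set xs \<subseteq> {..<b} \<and> length xs \<le> n}"
    using T unfolding cand_nodes_def by auto
  moreover have "finite {xs. set xs \<subseteq> {..<b} \<and> length xs \<le> n}"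
    by (rule finite_lists_length_le) simp
  ultimately show ?thesis by (rule finite_subset)
qed

lemma mfac_nonneg: "lam > 0 \<Longrightarrow> 0 \<le> mfac lam th B T u"
  unfolding mfac_def using Gf_pos[of lam] Gf_lt1[of lam] by (auto simp: less_imp_le)

lemma event_lim:
  fixes B :: "nat list \<Rightarrow> real"
  assumes l: "lam > 0" and V: "valid b T" and b: "0 < b"
  shows "(\<lambda>n. \<Prod>u\<in>{u\<in>T. length u < n}. mfac lam th B T u)
     \<longlonglongrightarrow> measure (noise_space lam) {eta \<in> space (noise_space lam). out b th B eta = T}"
proof -
  interpret L: prob_space "laplace lam" by (rule prob_space_laplace[OF l])
  interpret P: product_prob_space "\<lambda>_::nat list. laplace lam" "UNIV :: nat list set"
    by unfold_locales
  let ?M = "noise_space lam"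
  have M: "?M = PiM UNIV (\<lambda>_::nat list. laplace lam)" unfolding noise_space_def by simp
  have TC: "T \<subseteq> cand_nodes b" using V unfolding valid_def by blast
  define A where "A n = {eta \<in> space ?M. \<forall>u\<in>{u\<in>T. length u < n}. eta u \<in> Sset th B T u}" for n
  have sets_S: "Sset th B T u \<in> sets (laplace lam)" for u
    unfolding Sset_def by simp
  have mA: "measure ?M (A n) = (\<Prod>u\<in>{u\<in>T. length u < n}. mfac lam th B T u)" for n
  proof -
    have "emeasure ?M (A n) = (\<Prod>u\<in>{u\<in>T. length u < n}. emeasure (laplace lam) (Sset th B T u))"
      unfolding A_def M by (rule P.emeasure_PiM_Collect) (use finite_Tn[OF TC] sets_S in auto)
    also have "\<dots> = (\<Prod>u\<in>{u\<in>T. length u < n}. ennreal (mfac lam th B T u))"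
    proof (rule prod.cong[OF refl])
      fix u
      show "emeasure (laplace lam) (Sset th B T u) = ennreal (mfac lam th B T u)"
        unfolding Sset_def mfac_def
        using measure_laplace_gt[OF l] measure_laplace_le[OF l]
        by (simp add: L.emeasure_eq_measure)
    qed
    also have "\<dots> = ennreal (\<Prod>u\<in>{u\<in>T. length u < n}. mfac lam th B T u)"
      by (rule prod_ennreal) (simp add: mfac_nonneg[OF l])
    finally show ?thesis unfolding measure_def
      by (simp add: prod_nonneg mfac_nonneg[OF l])
  qed
  interpret MP: prob_space ?M unfolding M by (rule P.P.prob_space_axioms)
  have setsA: "range A \<subseteq> sets ?M"
  proof
    fix X assume "X \<in> range A"
    then obtain n where X: "X = A n" by auto
    have "A n \<in> sets ?M" unfolding A_def
    proof (rule sets.sets_Collect_finite_All)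
      show "finite {u\<in>T. length u < n}" by (rule finite_Tn[OF TC])
      fix u
      show "{eta \<in> space ?M. eta u \<in> Sset th B T u} \<in> sets ?M"
        unfolding M by (rule sets_Collect_single') (use sets_S in auto)
    qed
    then show "X \<in> sets ?M" using X by simp
  qed
  have dec: "decseq A" unfolding decseq_def A_def by auto
  have inter: "(\<Inter>n. A n) = {eta \<in> space ?M. out b th B eta = T}"
  proof (rule set_eqI)
    fix eta
    have "(eta \<in> (\<Inter>n. A n)) = (\<forall>u\<in>T. eta u \<in> Sset th B T u)"
      unfolding A_def by auto
    also have "\<dots> = (\<forall>u\<in>T. (th < B u + eta u) = (u @ [0] \<in> T))"
      unfolding Sset_def by (intro ball_cong refl) auto
    also have "\<dots> = (out b th B eta = T)" using out_char[OF V b] by simp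
    finally show "(eta \<in> (\<Inter>n. A n)) = (eta \<in> {eta \<in> space ?M. out b th B eta = T})" by simp
  qed
  have "(\<lambda>n. measure ?M (A n)) \<longlonglongrightarrow> measure ?M (\<Inter>n. A n)"
    by (rule MP.finite_Lim_measure_decseq[OF setsA dec])
  then show ?thesis unfolding mA inter .
qed

lemma scheme_child:
  assumes S: "splitting_scheme Om b dm" and v: "v \<in> cand_nodes b" and i: "i < b"
  shows "dm (v @ [i]) \<subseteq> dm v"
proof -
  have "(\<Union>i<b. dm (v @ [i])) = dm v" using S v unfolding splitting_scheme_def by blast
  then show ?thesis using i by blast
qed

lemma scheme_disj:
  assumes S: "splitting_scheme Om b dm" and v: "v \<in> cand_nodes b" and i: "i < b" and j: "j < b"
    and ij: "i \<noteq> j"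
  shows "dm (v @ [i]) \<inter> dm (v @ [j]) = {}"
  using S v i j ij unfolding splitting_scheme_def by blast

lemma dm_take:
  assumes S: "splitting_scheme Om b dm"
  shows "v \<in> cand_nodes b \<Longrightarrow> k \<le> length v \<Longrightarrow> dm v \<subseteq> dm (take k v)"
proof (induction v arbitrary: k rule: rev_induct)
  case Nil then show ?case by simp
next
  case (snoc i w)
  have wc: "w \<in> cand_nodes b" and ib: "i < b" using snoc.prems by (auto simp: cand_snoc)
  show ?case
  proof (cases "k \<le> length w")
    case True
    have "dm (w @ [i]) \<subseteq> dm w" by (rule scheme_child[OF S wc ib])
    also have "dm w \<subseteq> dm (take k w)" by (rule snoc.IH[OF wc True])
    finally show ?thesis using True by simp
  next
    case False
    then have "k = length (w @ [i])" using snoc.prems by simp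
    then show ?thesis by simp
  qed
qed

lemma dm_disj_same_len:
  assumes S: "splitting_scheme Om b dm"
  shows "u \<in> cand_nodes b \<Longrightarrow> v \<in> cand_nodes b \<Longrightarrow> length u = length v \<Longrightarrow> u \<noteq> v \<Longrightarrow>
         dm u \<inter> dm v = {}"
proof (induction u arbitrary: v rule: rev_induct)
  case Nil then show ?case by simp
next
  case (snoc i u')
  obtain v' j where v: "v = v' @ [j]"
    using snoc.prems(3) by (cases v rule: rev_exhaust) auto
  have uc: "u' \<in> cand_nodes b" and ib: "i < b" using snoc.prems by (auto simp: cand_snoc)
  have vc: "v' \<in> cand_nodes b" and jb: "j < b" using snoc.prems v by (auto simp: cand_snoc)
  have len: "length u' = length v'" using snoc.prems(3) v by simp
  show ?case
  proof (cases "u' = v'")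
    case True
    then have "i \<noteq> j" using snoc.prems(4) v by simp
    then show ?thesis using scheme_disj[OF S uc ib jb] True v by simp
  next
    case False
    have "dm u' \<inter> dm v' = {}" by (rule snoc.IH[OF uc vc len False])
    moreover have "dm (u' @ [i]) \<subseteq> dm u'" by (rule scheme_child[OF S uc ib])
    moreover have "dm (v' @ [j]) \<subseteq> dm v'" by (rule scheme_child[OF S vc jb])
    ultimately show ?thesis using v by blast
  qed
qed

lemma path_prefix:
  assumes S: "splitting_scheme Om b dm"
    and u: "u \<in> cand_nodes b" and v: "v \<in> cand_nodes b" and xu: "x \<in> dm u" and xv: "x \<in> dm v"
    and le: "length u \<le> length v"
  shows "u = take (length u) v"
proof (rule ccontr)
  assume ne: "u \<noteq> take (length u) v"
  have tc: "take (length u) v \<in> cand_nodes b" by (rule cand_take[OF v])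
  have "x \<in> dm (take (length u) v)" using dm_take[OF S v le] xv by blast
  moreover have "dm u \<inter> dm (take (length u) v) = {}"
    by (rule dm_disj_same_len[OF S u tc]) (use le ne in auto)
  ultimately show False using xu by blast
qed

lemma node_count_add:
  "node_count dm (add_mset x D) v = node_count dm D v + (if x \<in> dm v then 1 else 0)"
  unfolding node_count_def by simp

lemma node_count_mono:
  "dm v \<subseteq> dm u \<Longrightarrow> node_count dm D v \<le> node_count dm D u"
  unfolding node_count_def
  by (rule size_mset_mono, rule filter_mset_mono_strong) auto

lemma fwd_factor:
  assumes l: "lam > 0" and hB: "th - B u = min d (1 - xx)" and hB': "th - B' u = min d (- xx)"
  shows "mfac lam th B' T u \<le> exp (rho lam d xx) * mfac lam th B T u"
proof -
  let ?a = "min d (- xx)" and ?b = "min d (1 - xx)"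
  have ab: "?a \<le> ?b" by auto
  have Gab: "Gf lam ?b \<le> Gf lam ?a" by (rule Gf_antimono[OF l ab])
  have pa: "0 < Gf lam ?a" and pb: "0 < Gf lam ?b" using Gf_pos[OF l] by auto
  have e: "exp (rho lam d xx) = Gf lam ?a / Gf lam ?b"
    unfolding rho_def using pa pb by (simp add: exp_diff)
  show ?thesis
  proof (cases "u @ [0] \<in> T")
    case True
    then show ?thesis unfolding mfac_def hB hB' e using pb by simp
  next
    case False
    have r1: "1 \<le> exp (rho lam d xx)" using rho_nonneg[OF l] by simp
    have m0: "0 \<le> 1 - Gf lam ?b" using Gf_lt1[OF l, of ?b] by simp
    have "1 - Gf lam ?a \<le> 1 - Gf lam ?b" using Gab by simp
    also have "\<dots> \<le> exp (rho lam d xx) * (1 - Gf lam ?b)" using r1 m0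
      by (metis mult_1 mult_right_mono)
    finally show ?thesis unfolding mfac_def hB hB' using False by simp
  qed
qed

lemma rev_factor:
  assumes l: "lam > 0" and hB: "th - B u = min d (1 - xx)" and hB': "th - B' u = min d (- xx)"
  shows "mfac lam th B T u \<le> (if u @ [0] \<in> T then 1 else exp (1/lam)) * mfac lam th B' T u"
proof -
  let ?a = "min d (- xx)" and ?b = "min d (1 - xx)"
  have ab: "?a \<le> ?b" by auto
  have ba: "?b \<le> ?a + 1" by auto
  have Gab: "Gf lam ?b \<le> Gf lam ?a" by (rule Gf_antimono[OF l ab])
  show ?thesis
  proof (cases "u @ [0] \<in> T")
    case True
    then show ?thesis unfolding mfac_def hB hB' using Gab by simp
  next
    case False
    then show ?thesis unfolding mfac_def hB hB' using Fc_bound[OF l ab ba] by simp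
  qed
qed

lemma theta_minus_bc:
  "th - biased_count dm D th d u = min d (1 - (real (node_count dm D u) + 1 - th - real (length u) * d))"
  unfolding biased_count_def by (simp add: max_def min_def)

lemma leaf_unique_aux:
  assumes S: "splitting_scheme Om b dm" and V: "valid b T" and b: "0 < b"
    and u: "u \<in> T" "x \<in> dm u" "u @ [0] \<notin> T"
    and v: "v \<in> T" "x \<in> dm v"
    and le: "length u \<le> length v"
  shows "u = v"
proof -
  have TC: "T \<subseteq> cand_nodes b" and pre: "\<forall>v\<in>T. \<forall>k\<le>length v. take k v \<in> T"
    and ch: "\<forall>u. \<forall>i<b. \<forall>j<b. (u @ [i] \<in> T) = (u @ [j] \<in> T)"
    using V unfolding valid_def by blast+
  have uc: "u \<in> cand_nodes b" and vc: "v \<in> cand_nodes b" using TC u v by auto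
  have ut: "u = take (length u) v" by (rule path_prefix[OF S uc vc u(2) v(2) le])
  show ?thesis
  proof (cases "length u = length v")
    case True
    then show ?thesis using ut by simp
  next
    case False
    then have lt: "length u < length v" using le by simp
    have "take (Suc (length u)) v = take (length u) v @ [v ! length u]"
      by (rule take_Suc_conv_app_nth[OF lt])
    then have eq: "take (Suc (length u)) v = u @ [v ! length u]" using ut by simp
    have "take (Suc (length u)) v \<in> T" using pre v(1) lt by simp
    then have in1: "u @ [v ! length u] \<in> T" using eq by simp
    have "v ! length u \<in> set v" using lt by simp
    then have ib: "v ! length u < b" using vc unfolding cand_nodes_def by auto
    have "u @ [0] \<in> T" using ch[rule_format, OF ib b] in1 by simp
    then show ?thesis using u(3) by simp
  qed
qed

lemma fin_ineq:
  fixes D :: "'a multiset"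
  assumes S: "splitting_scheme Om b dm" and l: "lam > 0" and d: "d = lam * ln (real b)"
    and V: "valid b T" and F: "F \<subseteq> T" "finite F"
    and ep: "(2 + 1 / (real b - 1)) / lam \<le> eps"
  shows "(\<Prod>u\<in>F. mfac lam th (biased_count dm (add_mset x D) th d) T u)
            \<le> exp eps * (\<Prod>u\<in>F. mfac lam th (biased_count dm D th d) T u)
      \<and> (\<Prod>u\<in>F. mfac lam th (biased_count dm D th d) T u)
            \<le> exp eps * (\<Prod>u\<in>F. mfac lam th (biased_count dm (add_mset x D) th d) T u)"
proof -
  define B where "B = biased_count dm D th d"
  define B' where "B' = biased_count dm (add_mset x D) th d"
  define m where "m = mfac lam th B T"
  define m' where "m' = mfac lam th B' T"
  define Pth where "Pth = {u. x \<in> dm u}"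
  define xv where "xv u = real (node_count dm D u) + 1 - th - real (length u) * d" for u
  define A where "A = F \<inter> Pth"
  have b2: "2 \<le> b" using S unfolding splitting_scheme_def by simp
  have b0: "0 < b" using b2 by simp
  have TC: "T \<subseteq> cand_nodes b" using V unfolding valid_def by blast
  have finA: "finite A" unfolding A_def using F by simp
  have AC: "A \<subseteq> cand_nodes b" unfolding A_def using F TC by auto
  have hB: "th - B u = min d (1 - xv u)" for u
    unfolding B_def xv_def by (rule theta_minus_bc)
  have hB': "th - B' u = min d (- xv u)" if "u \<in> Pth" for u
    using that unfolding B'_def xv_def Pth_def theta_minus_bc node_count_add by (simp add: algebra_simps)
  have offp: "m' u = m u" if "u \<notin> Pth" for u
  proof -
    have "B' u = B u" using that unfolding B_def B'_def Pth_def biased_count_def node_count_add by simp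
    then show ?thesis unfolding m_def m'_def mfac_def by simp
  qed
  have m0: "0 \<le> m u" "0 \<le> m' u" for u unfolding m_def m'_def by (auto intro: mfac_nonneg[OF l])
  have splitm: "(\<Prod>u\<in>F. m u) = (\<Prod>u\<in>A. m u) * (\<Prod>u\<in>F - Pth. m u)"
    unfolding A_def by (rule prod.Int_Diff[OF F(2)])
  have splitm': "(\<Prod>u\<in>F. m' u) = (\<Prod>u\<in>A. m' u) * (\<Prod>u\<in>F - Pth. m u)"
    unfolding A_def using prod.Int_Diff[OF F(2), of m' Pth] offp by simp
  have R0: "0 \<le> (\<Prod>u\<in>F - Pth. m u)" by (rule prod_nonneg) (use m0 in auto)
  have K: "(2 + 1 / (real b - 1)) / lam \<le> eps" by (rule ep)
  have inv: "1 / lam \<le> eps"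
  proof -
    have "1 / lam \<le> (2 + 1 / (real b - 1)) / lam"
      using l b2 by (intro divide_right_mono) auto
    then show ?thesis using K by linarith
  qed
  have fw: "(\<Prod>u\<in>A. m' u) \<le> exp eps * (\<Prod>u\<in>A. m u)"
  proof -
    have inj: "inj_on length A"
    proof (rule inj_onI)
      fix u v assume uv: "u \<in> A" "v \<in> A" "length u = length v"
      have "u = take (length u) v"
        by (rule path_prefix[OF S]) (use uv AC in \<open>auto simp: A_def Pth_def\<close>)
      then show "u = v" using uv(3) by simp
    qed
    have sp: "\<forall>u\<in>A. \<forall>v\<in>A. length u \<le> length v \<longrightarrow> xv v + real (length v - length u) * d \<le> xv u"
    proof (intro ballI impI)
      fix u v assume uA: "u \<in> A" and vA: "v \<in> A" and le: "length u \<le> length v"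
      have uc: "u \<in> cand_nodes b" and vc: "v \<in> cand_nodes b" using uA vA AC by auto
      have xu: "x \<in> dm u" and xvv: "x \<in> dm v" using uA vA unfolding A_def Pth_def by auto
      have ut: "u = take (length u) v" by (rule path_prefix[OF S uc vc xu xvv le])
      have "dm v \<subseteq> dm (take (length u) v)" by (rule dm_take[OF S vc le])
      then have "dm v \<subseteq> dm u" using ut by simp
      then have "node_count dm D v \<le> node_count dm D u" by (rule node_count_mono)
      then have c: "real (node_count dm D v) \<le> real (node_count dm D u)" by simp
      have "real (length v - length u) = real (length v) - real (length u)" using le by simp
      then show "xv v + real (length v - length u) * d \<le> xv u"
        unfolding xv_def using c by (simp add: algebra_simps)
    qed
    have "(\<Prod>u\<in>A. m' u) \<le> (\<Prod>u\<in>A. exp (rho lam d (xv u)) * m u)"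
    proof (rule prod_mono)
      fix u assume "u \<in> A"
      then have uP: "u \<in> Pth" unfolding A_def by simp
      show "0 \<le> m' u \<and> m' u \<le> exp (rho lam d (xv u)) * m u"
        using m0 fwd_factor[where B=B and B'=B' and u=u and T=T, OF l hB[of u] hB'[OF uP]] unfolding m_def m'_def by auto
    qed
    also have "\<dots> = exp (\<Sum>u\<in>A. rho lam d (xv u)) * (\<Prod>u\<in>A. m u)"
      by (simp add: prod.distrib exp_sum[OF finA])
    also have "\<dots> \<le> exp eps * (\<Prod>u\<in>A. m u)"
    proof (rule mult_right_mono)
      have "(\<Sum>u\<in>A. rho lam d (xv u)) \<le> (2 + 1 / (real b - 1)) / lam"
        by (rule core[OF l _ d finA inj sp]) (use b2 in simp)
      then show "exp (\<Sum>u\<in>A. rho lam d (xv u)) \<le> exp eps" using K by simp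
    qed (rule prod_nonneg, use m0 in auto)
    finally show ?thesis .
  qed
  have rv: "(\<Prod>u\<in>A. m u) \<le> exp eps * (\<Prod>u\<in>A. m' u)"
  proof -
    let ?f = "\<lambda>u. if u @ [0] \<in> T then 1 else exp (1/lam)"
    have "(\<Prod>u\<in>A. m u) \<le> (\<Prod>u\<in>A. ?f u * m' u)"
    proof (rule prod_mono)
      fix u assume "u \<in> A"
      then have uP: "u \<in> Pth" unfolding A_def by simp
      show "0 \<le> m u \<and> m u \<le> ?f u * m' u"
        using m0 rev_factor[where B=B and B'=B' and u=u and T=T, OF l hB[of u] hB'[OF uP]] unfolding m_def m'_def by auto
    qed
    also have "\<dots> = (\<Prod>u\<in>A. ?f u) * (\<Prod>u\<in>A. m' u)" by (simp add: prod.distrib)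
    also have "\<dots> \<le> exp eps * (\<Prod>u\<in>A. m' u)"
    proof (rule mult_right_mono)
      let ?L = "A \<inter> - {u. u @ [0] \<in> T}"
      have "(\<Prod>u\<in>A. ?f u) = (\<Prod>u\<in>A \<inter> {u. u @ [0] \<in> T}. 1) * (\<Prod>u\<in>?L. exp (1/lam))"
        by (rule prod.If_cases[OF finA])
      also have "\<dots> = exp (1/lam) ^ card ?L" by simp
      also have "\<dots> \<le> exp (1/lam) ^ 1"
      proof (rule power_increasing)
        have finL: "finite ?L" using finA by simp
        have "\<forall>p\<in>?L. \<forall>q\<in>?L. p = q"
        proof (intro ballI)
          fix p q assume p: "p \<in> ?L" and q: "q \<in> ?L"
          have pT: "p \<in> T" "x \<in> dm p" "p @ [0] \<notin> T" using p F unfolding A_def Pth_def by auto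
          have qT: "q \<in> T" "x \<in> dm q" "q @ [0] \<notin> T" using q F unfolding A_def Pth_def by auto
          show "p = q"
          proof (cases "length p \<le> length q")
            case True
            show ?thesis by (rule leaf_unique_aux[OF S V b0 pT qT(1,2) True])
          next
            case False
            then have "length q \<le> length p" by simp
            then show ?thesis using leaf_unique_aux[OF S V b0 qT pT(1,2)] by simp
          qed
        qed
        then show "card ?L \<le> 1" using card_le_Suc0_iff_eq[OF finL] by simp
      qed (use l in simp)
      also have "\<dots> \<le> exp eps" using inv by simp
      finally show "(\<Prod>u\<in>A. ?f u) \<le> exp eps" .
    qed (rule prod_nonneg, use m0 in auto)
    finally show ?thesis .
  qed
  have e0: "0 \<le> exp eps" by simp
  have "(\<Prod>u\<in>F. m' u) \<le> exp eps * (\<Prod>u\<in>F. m u)"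
    unfolding splitm splitm' using mult_right_mono[OF fw R0] by (simp add: mult.assoc)
  moreover have "(\<Prod>u\<in>F. m u) \<le> exp eps * (\<Prod>u\<in>F. m' u)"
    unfolding splitm splitm' using mult_right_mono[OF rv R0] by (simp add: mult.assoc)
  ultimately show ?thesis unfolding m_def m'_def B_def B'_def by simp
qed

theorem corollary1:
  fixes \<Omega> :: "'a set" and \<beta> :: nat and dm :: "nat list \<Rightarrow> 'a set"
    and \<epsilon> lam \<theta> \<delta> :: real
  assumes scheme: "splitting_scheme \<Omega> \<beta> dm"
    and eps: "\<epsilon> > 0"
    and lam: "lam \<ge> (2 * real \<beta> - 1) / (real \<beta> - 1) * (1 / \<epsilon>)"
    and delta: "\<delta> = lam * ln (real \<beta>)"
  shows "\<forall>D x T. set_mset D \<subseteq> \<Omega> \<longrightarrow> x \<in> \<Omega> \<longrightarrow>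
           privtree_prob \<beta> dm (add_mset x D) lam \<theta> \<delta> T
             \<le> exp \<epsilon> * privtree_prob \<beta> dm D lam \<theta> \<delta> T \<and>
           privtree_prob \<beta> dm D lam \<theta> \<delta> T
             \<le> exp \<epsilon> * privtree_prob \<beta> dm (add_mset x D) lam \<theta> \<delta> T"
proof (intro allI impI)
  fix D :: "'a multiset" and x :: 'a and T :: "nat list set"
  have b2: "2 \<le> \<beta>" using scheme unfolding splitting_scheme_def by simp
  have b0: "0 < \<beta>" using b2 by simp
  define K where "K = (2 * real \<beta> - 1) / (real \<beta> - 1)"
  have Kpos: "K > 0" unfolding K_def using b2 by (simp add: divide_pos_pos)
  have K2: "K = 2 + 1 / (real \<beta> - 1)" unfolding K_def using b2 by (simp add: field_simps)
  have lpos: "lam > 0"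
  proof -
    have "0 < K * (1 / \<epsilon>)" using Kpos eps by simp
    then show ?thesis using lam unfolding K_def by linarith
  qed
  have ep: "(2 + 1 / (real \<beta> - 1)) / lam \<le> \<epsilon>"
  proof -
    have "K * (1 / \<epsilon>) \<le> lam" using lam unfolding K_def .
    then have "K \<le> lam * \<epsilon>" using eps by (simp add: field_simps)
    then have "K / lam \<le> \<epsilon>" using lpos by (simp add: field_simps)
    then show ?thesis using K2 by simp
  qed
  define B where "B = biased_count dm D \<theta> \<delta>"
  define B' where "B' = biased_count dm (add_mset x D) \<theta> \<delta>"
  let ?M = "noise_space lam"
  have pD: "privtree_prob \<beta> dm D lam \<theta> \<delta> T = measure ?M {eta \<in> space ?M. out \<beta> \<theta> B eta = T}"
    unfolding privtree_prob_def privtree_output_out B_def ..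
  have pD': "privtree_prob \<beta> dm (add_mset x D) lam \<theta> \<delta> T = measure ?M {eta \<in> space ?M. out \<beta> \<theta> B' eta = T}"
    unfolding privtree_prob_def privtree_output_out B'_def ..
  show "privtree_prob \<beta> dm (add_mset x D) lam \<theta> \<delta> T \<le> exp \<epsilon> * privtree_prob \<beta> dm D lam \<theta> \<delta> T \<and>
        privtree_prob \<beta> dm D lam \<theta> \<delta> T \<le> exp \<epsilon> * privtree_prob \<beta> dm (add_mset x D) lam \<theta> \<delta> T"
  proof (cases "\<exists>eta. out \<beta> \<theta> B eta = T \<or> out \<beta> \<theta> B' eta = T")
    case False
    then have "{eta \<in> space ?M. out \<beta> \<theta> B eta = T} = {}" "{eta \<in> space ?M. out \<beta> \<theta> B' eta = T} = {}"
      by auto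
    then show ?thesis unfolding pD pD' by simp
  next
    case True
    then have V: "valid \<beta> T" using valid_out by metis
    have TC: "T \<subseteq> cand_nodes \<beta>" using V unfolding valid_def by blast
    let ?p = "\<lambda>n. \<Prod>u\<in>{u\<in>T. length u < n}. mfac lam \<theta> B T u"
    let ?p' = "\<lambda>n. \<Prod>u\<in>{u\<in>T. length u < n}. mfac lam \<theta> B' T u"
    have L: "?p \<longlonglongrightarrow> measure ?M {eta \<in> space ?M. out \<beta> \<theta> B eta = T}"
      by (rule event_lim[OF lpos V b0])
    have L': "?p' \<longlonglongrightarrow> measure ?M {eta \<in> space ?M. out \<beta> \<theta> B' eta = T}"
      by (rule event_lim[OF lpos V b0])
    have fi: "?p' n \<le> exp \<epsilon> * ?p n \<and> ?p n \<le> exp \<epsilon> * ?p' n" for n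
      unfolding B_def B'_def
      by (rule fin_ineq[OF scheme lpos delta V _ finite_Tn[OF TC] ep]) auto
    have "measure ?M {eta \<in> space ?M. out \<beta> \<theta> B' eta = T}
          \<le> exp \<epsilon> * measure ?M {eta \<in> space ?M. out \<beta> \<theta> B eta = T}"
      by (rule LIMSEQ_le[OF L' tendsto_mult_left[OF L]]) (use fi in auto)
    moreover have "measure ?M {eta \<in> space ?M. out \<beta> \<theta> B eta = T}
          \<le> exp \<epsilon> * measure ?M {eta \<in> space ?M. out \<beta> \<theta> B' eta = T}"
      by (rule LIMSEQ_le[OF L tendsto_mult_left[OF L']]) (use fi in auto)
    ultimately show ?thesis unfolding pD pD' by simp
  qed
qed

end
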